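(* Let $r,d:[0,\infty)\to\mathbb{R}$ be Lipschitz continuous functions satisfying $r(0)>d(0)>0$, $r'<0$, $r(+\infty)=0$ and $d'>0$. Let $n_C^0\ge 0$ be an integrable function on $[0,\infty)$ which is positive on a neighbourhood of $x=0$, and let $n_C(x,t)$ be the solution of $$\frac{\partial}{\partial t} n_C(x,t)=\big[r(x)-d(x)\big]\,n_C(x,t),\qquad x\ge 0,\ t>0,\qquad n_C(x,0)=n_C^0(x)$$ (i.e. the cancer-cell model with no therapy, $c(t)\equiv 0$, and no mutations, $\theta_C=0$). Set $\rho_C(t)=\int_0^\infty n_C(x,t)\,dx$. Then $\rho_C(t)\to\infty$ as $t\to\infty$ with an exponential rate (there exist $\lambda>0$ and $C>0$ with $\rho_C(t)\ge Ce^{\lambda t}$ for all $t\ge0$), and $$\frac{n_C(\cdot,t)}{\rho_C(t)}\longrightarrow \delta(x)\quad\text{as } t\to\infty,$$ weakly in the sense of measures.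
   Context: $n_C(x,t)$ is the density of cancer cells with resistance-gene expression level $x\in[0,\infty)$ at time $t$; $r$ is the reproduction rate and $d$ the death rate; $\delta(x)$ is the Dirac mass at $x=0$. *)

theory Defs
  imports "HOL-Analysis.Analysis"
begin

definition rho_C :: "(real \<Rightarrow> real \<Rightarrow> real) \<Rightarrow> real \<Rightarrow> real" where
  "rho_C n t = (LINT x:{0..}|lborel. n x t)"

end

theory Submission
  imports Defs
begin


lemma sol:
  fixes a n0 :: real and f :: "real \<Rightarrow> real"
  assumes "\<forall>t\<ge>0. (f has_real_derivative a * f t) (at t within {0..})"
  shows "\<forall>t\<ge>0. f t = f 0 * exp (a * t)"
proof -
  define g where "g s = f s * exp (- a * s)" for s
  have "\<exists>c. \<forall>s\<in>{0::real..}. g s = c"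
  proof (rule has_field_derivative_zero_constant)
    fix s :: real assume s: "s \<in> {0..}"
    have "(g has_real_derivative (a * f s) * exp (- a * s) + f s * (exp (- a * s) * (- a))) (at s within {0..})"
      unfolding g_def using assms s
      by (auto intro!: derivative_eq_intros)
    then show "(g has_real_derivative 0) (at s within {0..})" by (simp add: algebra_simps)
  qed simp
  then obtain c where c: "\<forall>s\<ge>0. g s = c" by auto
  show ?thesis
  proof (intro allI impI)
    fix t :: real assume "t \<ge> 0"
    then have "g t = g 0" using c by auto
    then show "f t = f 0 * exp (a * t)" unfolding g_def
      by (simp add: exp_minus field_simps)
  qed
qed

lemma decr:
  fixes r :: "real \<Rightarrow> real"
  assumes "continuous_on {0..} r"
    and "\<forall>x\<ge>0. \<exists>D. (r has_real_derivative D) (at x within {0..}) \<and> D < 0"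
    and "0 \<le> x" "x < y"
  shows "r y < r x"
proof (rule DERIV_neg_imp_decreasing_open[OF assms(4)])
  fix z assume z: "x < z" "z < y"
  have "z \<ge> 0" using z assms(3) by linarith
  then obtain D where "(r has_real_derivative D) (at z within {0..})" "D < 0"
    using assms(2) by blast
  moreover have "at z within {0..} = at z"
    using z assms(3) by (intro at_within_interior) simp
  ultimately show "\<exists>y. DERIV r z :> y \<and> y < 0" by auto
next
  show "continuous_on {x..y} r" by (rule continuous_on_subset[OF assms(1)]) (use assms(3) in auto)
qed

lemma incr:
  fixes r :: "real \<Rightarrow> real"
  assumes "continuous_on {0..} r"
    and "\<forall>x\<ge>0. \<exists>D. (r has_real_derivative D) (at x within {0..}) \<and> D > 0"
    and "0 \<le> x" "x < y"
  shows "r x < r y"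
proof (rule DERIV_pos_imp_increasing_open[OF assms(4)])
  fix z assume z: "x < z" "z < y"
  have "z \<ge> 0" using z assms(3) by linarith
  then obtain D where "(r has_real_derivative D) (at z within {0..})" "D > 0"
    using assms(2) by blast
  moreover have "at z within {0..} = at z"
    using z assms(3) by (intro at_within_interior) simp
  ultimately show "\<exists>y. DERIV r z :> y \<and> y > 0" by auto
next
  show "continuous_on {x..y} r" by (rule continuous_on_subset[OF assms(1)]) (use assms(3) in auto)
qed



lemma si_mult:
  fixes n0 g :: "real \<Rightarrow> real"
  assumes n0: "set_integrable lborel {0..} n0" and g: "continuous_on {0..} g" 
    and B: "\<forall>x\<ge>0. \<bar>g x\<bar> \<le> B"
  shows "set_integrable lborel {0..} (\<lambda>x. n0 x * g x)"
proof (rule set_integrable_bound[where f="\<lambda>x. B * n0 x"])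
  show "set_integrable lborel {0..} (\<lambda>x. B * n0 x)" using n0 by simp
  have m1: "(\<lambda>x. indicator {0..} x *\<^sub>R n0 x) \<in> borel_measurable lborel"
    using n0 unfolding set_integrable_def by (rule borel_measurable_integrable)
  have m2: "(\<lambda>x. indicator {0..} x *\<^sub>R g x) \<in> borel_measurable borel"
    using set_measurable_continuous_on[OF _ g] unfolding set_borel_measurable_def by simp
  have "(\<lambda>x. indicator {0..} x *\<^sub>R (n0 x * g x)) = (\<lambda>x. (indicator {0..} x *\<^sub>R n0 x) * (indicator {0..} x *\<^sub>R g x))"
    by (auto simp: indicator_def)
  then show "set_borel_measurable lborel {0..} (\<lambda>x. n0 x * g x)"
    unfolding set_borel_measurable_def using m1 m2 by simp
  show "AE x in lborel. x \<in> {0..} \<longrightarrow> norm (n0 x * g x) \<le> norm (B * n0 x)"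
  proof (rule AE_I2, intro impI)
    fix x :: real assume "x \<in> {0..}"
    then have "\<bar>g x\<bar> \<le> B" using B by auto
    then show "norm (n0 x * g x) \<le> norm (B * n0 x)"
      by (simp add: abs_mult mult_right_mono mult.commute)
  qed
qed

lemma int_pos:
  fixes n0 :: "real \<Rightarrow> real"
  assumes n0: "set_integrable lborel {0..} n0" and eta: "0 < eta"
    and pos: "\<forall>x. 0 \<le> x \<and> x \<le> eta \<longrightarrow> n0 x > 0"
  shows "(LINT x:{0..eta}|lborel. n0 x) > 0"
proof -
  have int: "set_integrable lborel {0..eta} n0"
    using n0 by (rule set_integrable_subset) auto
  have ge: "(LINT x:{0..eta}|lborel. n0 x) \<ge> (LINT x:{0..eta}|lborel. 0)"
    using int pos by (intro set_integral_mono) (auto simp: set_integrable_def)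
  have "(LINT x:{0..eta}|lborel. n0 x) \<noteq> 0"
  proof
    assume "(LINT x:{0..eta}|lborel. n0 x) = 0"
    then have "integral\<^sup>L lborel (\<lambda>x. indicator {0..eta} x *\<^sub>R n0 x) = 0"
      unfolding set_lebesgue_integral_def .
    moreover have "AE x in lborel. 0 \<le> indicator {0..eta} x *\<^sub>R n0 x"
      using pos by (intro AE_I2) (auto simp: indicator_def less_imp_le)
    ultimately have "AE x in lborel. indicator {0..eta} x *\<^sub>R n0 x = 0"
      using integral_nonneg_eq_0_iff_AE int unfolding set_integrable_def by blast
    then have "AE x in lborel. x \<notin> {0..eta}"
      by (rule AE_mp) (use pos in \<open>auto intro!: AE_I2 simp: indicator_def\<close>)
    then have "emeasure lborel {0..eta} = 0"
      by (subst (asm) AE_iff_measurable[of "{0..eta}"]) auto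
    then show False using eta by simp
  qed
  then show ?thesis using ge by simp
qed


lemma subset_le:
  fixes f :: "real \<Rightarrow> real"
  assumes "set_integrable lborel B f" "A \<subseteq> B" "A \<in> sets lborel" "\<forall>x\<in>B. f x \<ge> 0"
  shows "(LINT x:A|lborel. f x) \<le> (LINT x:B|lborel. f x)"
proof -
  have "set_integrable lborel A f" using assms(1,3,2) by (rule set_integrable_subset)
  then show ?thesis using assms unfolding set_integrable_def set_lebesgue_integral_def
    by (intro integral_mono) (auto simp: indicator_def)
qed

theorem lemma2p2:
  fixes r d n0 :: "real \<Rightarrow> real" and n :: "real \<Rightarrow> real \<Rightarrow> real"
  assumes r_lip: "\<exists>L. L-lipschitz_on {0..} r"
    and d_lip: "\<exists>L. L-lipschitz_on {0..} d"
    and r0_d0: "r 0 > d 0" "d 0 > 0"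
    and r_deriv: "\<forall>x\<ge>0. \<exists>D. (r has_real_derivative D) (at x within {0..}) \<and> D < 0"
    and r_infty: "(r \<longlongrightarrow> 0) at_top"
    and d_deriv: "\<forall>x\<ge>0. \<exists>D. (d has_real_derivative D) (at x within {0..}) \<and> D > 0"
    and n0_nonneg: "\<forall>x\<ge>0. n0 x \<ge> 0"
    and n0_int: "set_integrable lborel {0..} n0"
    and n0_pos: "\<exists>\<epsilon>>0. \<forall>x. 0 \<le> x \<and> x < \<epsilon> \<longrightarrow> n0 x > 0"
    and n_ode: "\<forall>x\<ge>0. \<forall>t\<ge>0.
                 ((\<lambda>s. n x s) has_real_derivative (r x - d x) * n x t) (at t within {0..})"
    and n_init: "\<forall>x\<ge>0. n x 0 = n0 x"
  shows "(\<exists>lam>0. \<exists>C>0. \<forall>t\<ge>0. rho_C n t \<ge> C * exp (lam * t))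
         \<and> filterlim (rho_C n) at_top at_top
         \<and> (\<forall>\<phi>::real \<Rightarrow> real. continuous_on {0..} \<phi> \<and> bounded (\<phi> ` {0..}) \<longrightarrow>
              ((\<lambda>t. (LINT x:{0..}|lborel. \<phi> x * n x t) / rho_C n t) \<longlongrightarrow> \<phi> 0) at_top)"
  proof -
  define a where "a x = r x - d x" for x
  obtain Lr where Lr: "Lr-lipschitz_on {0..} r" using r_lip by auto
  obtain Ld where Ld: "Ld-lipschitz_on {0..} d" using d_lip by auto
  have cr: "continuous_on {0..} r" using Lr by (rule lipschitz_on_continuous_on)
  have cd: "continuous_on {0..} d" using Ld by (rule lipschitz_on_continuous_on)
  have ca: "continuous_on {0..} a" unfolding a_def using cr cd by (intro continuous_intros)
  have adec: "a y < a x" if "0 \<le> x" "x < y" for x y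
    using decr[OF cr r_deriv that] incr[OF cd d_deriv that] unfolding a_def by simp
  have ale: "a y \<le> a x" if "0 \<le> x" "x \<le> y" for x y
    using adec[of x y] that by (cases "x = y") auto
  have a0: "a 0 > 0" unfolding a_def using r0_d0 by simp
  obtain \<epsilon> where eps: "\<epsilon> > 0" "\<forall>x. 0 \<le> x \<and> x < \<epsilon> \<longrightarrow> n0 x > 0" using n0_pos by auto
  have nsol: "n x t = n0 x * exp (a x * t)" if "x \<ge> 0" "t \<ge> 0" for x t
  proof -
    have "\<forall>t\<ge>0. ((\<lambda>s. n x s) has_real_derivative a x * n x t) (at t within {0..})"
      using n_ode that unfolding a_def by auto
    from sol[OF this] that n_init show ?thesis by auto
  qed
  have expb: "\<bar>exp (a x * t)\<bar> \<le> exp (a 0 * t)" if "x \<ge> 0" "t \<ge> 0" for x t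
  proof -
    have "a x \<le> a 0" using ale[of 0 x] that by simp
    then have "a x * t \<le> a 0 * t" using that by (intro mult_right_mono) auto
    then show ?thesis by simp
  qed
  have intE: "set_integrable lborel {0..} (\<lambda>x. n0 x * exp (a x * t))" if "t \<ge> 0" for t
  proof -
    have "continuous_on {0..} (\<lambda>x. exp (a x * t))" by (intro continuous_intros ca)
    moreover have "\<forall>x\<ge>0. \<bar>exp (a x * t)\<bar> \<le> exp (a 0 * t)" using expb that by blast
    ultimately show ?thesis by (rule si_mult[OF n0_int])
  qed
  have rho_eq: "rho_C n t = (LINT x:{0..}|lborel. n0 x * exp (a x * t))" if "t \<ge> 0" for t
    unfolding rho_C_def by (rule set_lebesgue_integral_cong) (auto simp: nsol that)
  have lower: "\<exists>c>0. \<forall>t\<ge>0. rho_C n t \<ge> c * exp (a \<eta> * t)" if "0 < \<eta>" "\<eta> < \<epsilon>" for \<eta>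
  proof -
    define c where "c = (LINT x:{0..\<eta>}|lborel. n0 x)"
    have cpos: "c > 0" unfolding c_def using that eps
      by (intro int_pos[OF n0_int]) auto
    have "rho_C n t \<ge> c * exp (a \<eta> * t)" if t: "t \<ge> 0" for t
    proof -
      have "c * exp (a \<eta> * t) = (LINT x:{0..\<eta>}|lborel. n0 x * exp (a \<eta> * t))"
        unfolding c_def by simp
      also have "\<dots> \<le> (LINT x:{0..\<eta>}|lborel. n0 x * exp (a x * t))"
      proof (rule set_integral_mono)
        show "set_integrable lborel {0..\<eta>} (\<lambda>x. n0 x * exp (a \<eta> * t))"
          using set_integrable_subset[OF n0_int, of "{0..\<eta>}"] by auto
        show "set_integrable lborel {0..\<eta>} (\<lambda>x. n0 x * exp (a x * t))"
          using set_integrable_subset[OF intE[OF t], of "{0..\<eta>}"] by auto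
        fix x assume "x \<in> {0..\<eta>}"
        then show "n0 x * exp (a \<eta> * t) \<le> n0 x * exp (a x * t)"
          using ale[of x \<eta>] t n0_nonneg by (auto intro!: mult_left_mono mult_right_mono)
      qed
      also have "\<dots> \<le> (LINT x:{0..}|lborel. n0 x * exp (a x * t))"
        using intE[OF t] n0_nonneg by (intro subset_le) auto
      finally show ?thesis using rho_eq[OF t] by simp
    qed
    then show ?thesis using cpos by blast
  qed
  have rho_pos: "rho_C n t > 0" if "t \<ge> 0" for t
  proof -
    obtain c where "c > 0" "\<forall>t\<ge>0. rho_C n t \<ge> c * exp (a (\<epsilon>/2) * t)"
      using lower[of "\<epsilon>/2"] eps by auto
    then show ?thesis using that by (meson exp_gt_zero less_le_trans mult_pos_pos)
  qed
  obtain \<delta>0 where d0: "\<delta>0 > 0" "\<forall>x\<in>{0..}. dist x 0 < \<delta>0 \<longrightarrow> dist (a x) (a 0) < a 0 / 2"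
    using ca a0 unfolding continuous_on_iff by (metis atLeast_iff half_gt_zero order_refl)
  define \<eta>1 where "\<eta>1 = min \<delta>0 \<epsilon> / 2"
  have e1: "0 < \<eta>1" "\<eta>1 < \<epsilon>" "\<eta>1 < \<delta>0" using d0 eps unfolding \<eta>1_def by auto
  have lam: "a \<eta>1 > 0"
  proof -
    have "\<bar>a \<eta>1 - a 0\<bar> < a 0 / 2" using d0(2)[rule_format, of \<eta>1] e1 by (auto simp: dist_real_def)
    then show ?thesis by arith
  qed
  obtain C where C: "C > 0" "\<forall>t\<ge>0. rho_C n t \<ge> C * exp (a \<eta>1 * t)"
    using lower[OF e1(1,2)] by auto
  have P1: "\<exists>lam>0. \<exists>C>0. \<forall>t\<ge>0. rho_C n t \<ge> C * exp (lam * t)"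
    using lam C by blast
  have P2: "filterlim (rho_C n) at_top at_top"
  proof (rule filterlim_at_top_mono)
    have "LIM t at_top. a \<eta>1 * t :> at_top"
      using filterlim_tendsto_pos_mult_at_top[OF tendsto_const lam filterlim_ident] .
    then have "LIM t at_top. exp (a \<eta>1 * t) :> at_top"
      by (rule filterlim_compose[OF exp_at_top])
    then show "LIM t at_top. C * exp (a \<eta>1 * t) :> at_top"
      using filterlim_tendsto_pos_mult_at_top[OF tendsto_const C(1)] by blast
    show "\<forall>\<^sub>F t in at_top. C * exp (a \<eta>1 * t) \<le> rho_C n t"
      using eventually_ge_at_top[of "0::real"] by (rule eventually_mono) (use C(2) in auto)
  qed
  have P3: "((\<lambda>t. (LINT x:{0..}|lborel. \<phi> x * n x t) / rho_C n t) \<longlongrightarrow> \<phi> 0) at_top"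
    if phic: "continuous_on {0..} \<phi>" and phib: "bounded (\<phi> ` {0..})" for \<phi> :: "real \<Rightarrow> real"
  proof (rule tendstoI)
    fix e :: real assume e: "e > 0"
    obtain B where B: "\<forall>x\<ge>0. \<bar>\<phi> x\<bar> \<le> B" using phib unfolding bounded_iff by auto
    have B0: "B \<ge> 0" using B[rule_format, of 0] by simp
    obtain \<delta> where dl: "\<delta> > 0" "\<forall>x\<in>{0..}. dist x 0 < \<delta> \<longrightarrow> dist (\<phi> x) (\<phi> 0) < e / 2"
      using phic e unfolding continuous_on_iff by (metis atLeast_iff half_gt_zero order_refl)
    define \<eta> where "\<eta> = min \<delta> \<epsilon> / 2"
    have et: "0 < \<eta>" "\<eta> < \<epsilon>" "\<eta> < \<delta>" using dl eps unfolding \<eta>_def by auto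
    obtain c where c: "c > 0" "\<forall>t\<ge>0. rho_C n t \<ge> c * exp (a \<eta> * t)"
      using lower[OF et(1,2)] by auto
    define M where "M = (LINT x:{0..}|lborel. n0 x)"
    have M0: "M \<ge> 0" unfolding M_def
      using set_integral_mono[OF _ n0_int, of "\<lambda>x. 0"] n0_nonneg by (auto simp: set_integrable_def)
    define K where "K = 2 * B * M / c"
    define k where "k = a \<delta> - a \<eta>"
    have k: "k < 0" unfolding k_def using adec[of \<eta> \<delta>] et by auto
    have "LIM t at_top. k * t :> at_bot"
      using filterlim_tendsto_neg_mult_at_bot[OF tendsto_const k filterlim_ident] .
    then have "((\<lambda>t. exp (k * t)) \<longlongrightarrow> 0) at_top"
      by (rule filterlim_compose[OF exp_at_bot])
    then have "((\<lambda>t. K * exp (k * t)) \<longlongrightarrow> 0) at_top"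
      by (rule tendsto_mult_right_zero)
    then have ev: "\<forall>\<^sub>F t in at_top. K * exp (k * t) < e / 2"
      using order_tendstoD(2)[of _ 0 at_top "e/2"] e by simp
    show "\<forall>\<^sub>F t in at_top. dist ((LINT x:{0..}|lborel. \<phi> x * n x t) / rho_C n t) (\<phi> 0) < e"
      using ev eventually_ge_at_top[of "0::real"]
    proof eventually_elim
      case (elim t)
      have t: "t \<ge> 0" using elim by simp
      define R where "R = rho_C n t"
      have R: "R > 0" "R = (LINT x:{0..}|lborel. n0 x * exp (a x * t))"
        unfolding R_def using rho_pos[OF t] rho_eq[OF t] by auto
      have Rc: "R \<ge> c * exp (a \<eta> * t)" unfolding R_def using c t by auto
      have phiE: "\<bar>\<phi> x * exp (a x * t)\<bar> \<le> B * exp (a 0 * t)" if "x \<ge> 0" for x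
        using B expb[OF that t] that unfolding abs_mult by (intro mult_mono) auto
      have intP: "set_integrable lborel {0..} (\<lambda>x. n0 x * (\<phi> x * exp (a x * t)))"
      proof -
        have "continuous_on {0..} (\<lambda>x. \<phi> x * exp (a x * t))" by (intro continuous_intros ca phic)
        moreover have "\<forall>x\<ge>0. \<bar>\<phi> x * exp (a x * t)\<bar> \<le> B * exp (a 0 * t)" using phiE by blast
        ultimately show ?thesis by (rule si_mult[OF n0_int])
      qed
      define I where "I = (LINT x:{0..}|lborel. \<phi> x * n x t)"
      have I: "I = (LINT x:{0..}|lborel. n0 x * (\<phi> x * exp (a x * t)))"
        unfolding I_def using nsol t by (intro set_lebesgue_integral_cong) auto
      define h where "h x = n0 x * (\<phi> x * exp (a x * t)) - \<phi> 0 * (n0 x * exp (a x * t))" for x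
      have i2: "set_integrable lborel {0..} (\<lambda>x. \<phi> 0 * (n0 x * exp (a x * t)))"
        using intE[OF t] by (intro set_integrable_mult_right)
      have inth: "set_integrable lborel {0..} h" unfolding h_def by (rule set_integral_diff(1)[OF intP i2])
      have Ih: "I - \<phi> 0 * R = (LINT x:{0..}|lborel. h x)"
        unfolding h_def set_integral_diff(2)[OF intP i2] set_integral_mult_right I R(2) by (rule refl)
      define g where "g x = e / 2 * (n0 x * exp (a x * t)) + (2 * B * exp (a \<delta> * t)) * n0 x" for x
      have g1: "set_integrable lborel {0..} (\<lambda>x. e / 2 * (n0 x * exp (a x * t)))"
        using intE[OF t] by (intro set_integrable_mult_right)
      have g2: "set_integrable lborel {0..} (\<lambda>x. (2 * B * exp (a \<delta> * t)) * n0 x)"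
        using n0_int by (intro set_integrable_mult_right)
      have intg: "set_integrable lborel {0..} g" unfolding g_def by (rule set_integral_add(1)[OF g1 g2])
      have Ig: "(LINT x:{0..}|lborel. g x) = e / 2 * R + 2 * B * exp (a \<delta> * t) * M"
        unfolding g_def set_integral_add(2)[OF g1 g2] set_integral_mult_right R(2) M_def by (rule refl)
      have hg: "\<bar>h x\<bar> \<le> g x" if x: "x \<ge> 0" for x
      proof -
        have hx: "h x = n0 x * ((\<phi> x - \<phi> 0) * exp (a x * t))" unfolding h_def by (simp add: algebra_simps)
        have "\<bar>\<phi> x - \<phi> 0\<bar> * exp (a x * t) \<le> e / 2 * exp (a x * t) + 2 * B * exp (a \<delta> * t)"
        proof (cases "x < \<delta>")
          case True
          then have "dist x 0 < \<delta>" using x by (simp add: dist_real_def)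
          then have "dist (\<phi> x) (\<phi> 0) < e / 2" using dl(2) x by simp
          then have "\<bar>\<phi> x - \<phi> 0\<bar> \<le> e / 2" by (simp add: dist_real_def)
          then have "\<bar>\<phi> x - \<phi> 0\<bar> * exp (a x * t) \<le> e / 2 * exp (a x * t)"
            by (rule mult_right_mono) simp
          moreover have "0 \<le> 2 * B * exp (a \<delta> * t)" using B0 by simp
          ultimately show ?thesis by linarith
        next
          case False
          have "\<bar>\<phi> x\<bar> \<le> B" "\<bar>\<phi> 0\<bar> \<le> B" using B x by auto
          then have "\<bar>\<phi> x - \<phi> 0\<bar> \<le> 2 * B" using abs_triangle_ineq4[of "\<phi> x" "\<phi> 0"] by linarith
          moreover have "a x \<le> a \<delta>" using ale[of \<delta> x] False dl(1) by simp
          then have "a x * t \<le> a \<delta> * t" using t by (rule mult_right_mono)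
          then have "exp (a x * t) \<le> exp (a \<delta> * t)" by simp
          ultimately have "\<bar>\<phi> x - \<phi> 0\<bar> * exp (a x * t) \<le> 2 * B * exp (a \<delta> * t)"
            by (intro mult_mono) auto
          moreover have "0 \<le> e / 2 * exp (a x * t)" using e by simp
          ultimately show ?thesis by linarith
        qed
        then have "n0 x * (\<bar>\<phi> x - \<phi> 0\<bar> * exp (a x * t)) \<le> n0 x * (e / 2 * exp (a x * t) + 2 * B * exp (a \<delta> * t))"
          using n0_nonneg x by (intro mult_left_mono) auto
        moreover have "\<bar>h x\<bar> = n0 x * (\<bar>\<phi> x - \<phi> 0\<bar> * exp (a x * t))"
          unfolding hx abs_mult using n0_nonneg x by simp
        moreover have "n0 x * (e / 2 * exp (a x * t) + 2 * B * exp (a \<delta> * t)) = g x"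
          unfolding g_def by (simp add: algebra_simps)
        ultimately show ?thesis by simp
      qed
      have up: "(LINT x:{0..}|lborel. h x) \<le> (LINT x:{0..}|lborel. g x)"
        using inth intg hg by (intro set_integral_mono) (auto simp: abs_le_iff)
      have intng: "set_integrable lborel {0..} (\<lambda>x. - g x)"
        using set_integrable_mult_right[of "-1" lborel "{0..}" g] intg by simp
      have lo: "(LINT x:{0..}|lborel. - g x) \<le> (LINT x:{0..}|lborel. h x)"
      proof (rule set_integral_mono[OF intng inth])
        fix x :: real assume "x \<in> {0..}"
        then have "\<bar>h x\<bar> \<le> g x" using hg by simp
        then show "- g x \<le> h x" by (simp add: abs_le_iff)
      qed
      have absI: "\<bar>I - \<phi> 0 * R\<bar> \<le> e / 2 * R + 2 * B * exp (a \<delta> * t) * M"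
        using up lo Ih Ig set_integral_uminus[OF intg] by linarith
      have "I / R - \<phi> 0 = (I - \<phi> 0 * R) / R" using R(1) by (simp add: diff_divide_distrib)
      then have "\<bar>I / R - \<phi> 0\<bar> = \<bar>I - \<phi> 0 * R\<bar> / R" using R(1) by simp
      also have "\<dots> \<le> (e / 2 * R + 2 * B * exp (a \<delta> * t) * M) / R"
        using absI R(1) by (simp add: divide_right_mono)
      also have "\<dots> = e / 2 + 2 * B * M * exp (a \<delta> * t) / R" using R(1) by (simp add: add_divide_distrib)
      also have "\<dots> \<le> e / 2 + 2 * B * M * exp (a \<delta> * t) / (c * exp (a \<eta> * t))"
        using Rc c(1) B0 M0 R(1) by (intro add_left_mono divide_left_mono) auto
      also have "\<dots> = e / 2 + K * exp (k * t)"
      proof -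
        have "exp (k * t) = exp (a \<delta> * t) / exp (a \<eta> * t)"
          unfolding k_def left_diff_distrib exp_diff ..
        then show ?thesis unfolding K_def by simp
      qed
      also have "\<dots> < e" using elim by simp
      finally show ?case unfolding I_def R_def dist_real_def .
    qed
  qed
  show ?thesis using P1 P2 P3 by blast
qed

end
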